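(* Let $\underline{l}=\min_k l_k$ and let $\mathcal{Y}_c=\{y\in\mathbb{Z}: \lfloor-\beta/\underline{l}\rfloor\le y\le\lceil\beta/\underline{l}\rceil+\alpha\}$. Let $\mathcal{Y}$ be an output alphabet with $\mathcal{Y}_c\subseteq\mathcal{Y}\subseteq\mathbb{Z}$, let $\Delta\ge 0$, and let $P_{\mathbf{Y}|\mathbf{X}}\in\Gamma_{\mathcal{Y}}(\Delta)$. Then there exists a function $F:\mathcal{Y}^n\to\mathcal{Y}_c^n$ such that the policy $F\circ P_{\mathbf{Y}|\mathbf{X}}$ (i.e. $\mathbf{x}\mapsto$ the law of $F(\mathbf{Y})$ for $\mathbf{Y}\sim P_{\mathbf{Y}|\mathbf{X}=\mathbf{x}}$) belongs to $\Gamma_{\mathcal{Y}_c}(\Delta)$.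
   Context: Fix integers $\alpha\ge 1$, $\beta\ge 0$, $n\ge 1$, and an initial state $s_0\in\mathcal{S}=\{0,\dots,\beta\}$. Let $\mathcal{X}=\{0,\dots,\alpha\}$. For $\mathbf{x}\in\mathcal{X}^n$, $\mathbf{y}\in\mathbb{Z}^n$ the battery states are $s_i=s_0+\sum_{k=0}^{i-1}y_k-\sum_{k=0}^{i-1}x_k$, $i=0,\dots,n$, and for an output alphabet $\mathcal{Y}\subseteq\mathbb{Z}$ with $\mathcal{X}\subseteq\mathcal{Y}$, $\mathcal{Y}^n(s_0,\mathbf{x})=\{\mathbf{y}\in\mathcal{Y}^n: s_i\in\{0,\dots,\beta\}\ \forall i=0,\dots,n\}$. A battery policy with output alphabet $\mathcal{Y}$ is a conditional distribution $P_{\mathbf{Y}|\mathbf{X}}$ from $\mathcal{X}^n$ to $\mathcal{Y}^n$; it is feasible if $\mathrm{supp}(P_{\mathbf{Y}|\mathbf{X}=\mathbf{x}})\subseteq\mathcal{Y}^n(s_0,\mathbf{x})$ for all $\mathbf{x}$; the set of feasible policies is $\Omega_{\mathcal{Y}}(s_0)$. Market price: a positive integer $K$, block lengths $l_0,\dots,l_{K-1}\ge 1$ with $\sum_k l_k=n$, prices $m_0,\dots,m_{K-1}\in\mathbb{R}$, and $\mathbf{m}\in\mathbb{R}^n$ the vector equal to $m_k$ on the $l_k$ consecutive time steps of block $k$ (blocks in order). The cost of a policy at $\mathbf{x}$ is $g(P_{\mathbf{Y}|\mathbf{X}},\mathbf{x})=\mathbb{E}_{P_{\mathbf{Y}|\mathbf{X}=\mathbf{x}}}[\mathbf{m}^T\mathbf{Y}]-\min_{\mathbf{y}\in\mathcal{Y}^n(s_0,\mathbf{x})}\mathbf{m}^T\mathbf{y}$.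 For $\Delta\ge0$, $\Gamma_{\mathcal{Y}}(\Delta)=\{P_{\mathbf{Y}|\mathbf{X}}\in\Omega_{\mathcal{Y}}(s_0): g(P_{\mathbf{Y}|\mathbf{X}},\mathbf{x})\le\Delta\ \forall\mathbf{x}\in\mathcal{X}^n\}$ is the set of feasible $\Delta$-affordable policies. *)

theory Defs
  imports "HOL-Probability.Probability"
begin

text \<open>Sequences of length n are int lists; x ! k is x_k (0-based).\<close>

definition Xn :: "int \<Rightarrow> nat \<Rightarrow> int list set" where
  "Xn \<alpha> n = {x. length x = n \<and> set x \<subseteq> {0..\<alpha>}}"

definition outseqs :: "int set \<Rightarrow> nat \<Rightarrow> int list set" where
  "outseqs Y n = {y. length y = n \<and> set y \<subseteq> Y}"

definition bstate :: "int \<Rightarrow> int list \<Rightarrow> int list \<Rightarrow> nat \<Rightarrow> int" where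
  "bstate s0 x y i = s0 + (\<Sum>k<i. y ! k) - (\<Sum>k<i. x ! k)"

definition feasible_outputs :: "int set \<Rightarrow> int \<Rightarrow> int \<Rightarrow> int list \<Rightarrow> int list set" where
  "feasible_outputs Y \<beta> s0 x =
     {y \<in> outseqs Y (length x). \<forall>i \<le> length x. 0 \<le> bstate s0 x y i \<and> bstate s0 x y i \<le> \<beta>}"

definition mvec :: "nat list \<Rightarrow> real list \<Rightarrow> real list" where
  "mvec ls ms = concat (map (\<lambda>(l, p). replicate l p) (zip ls ms))"

definition dotp :: "real list \<Rightarrow> int list \<Rightarrow> real" where
  "dotp m y = (\<Sum>i<length y. m ! i * real_of_int (y ! i))"

definition cost :: "real list \<Rightarrow> int set \<Rightarrow> int \<Rightarrow> int \<Rightarrow> (int list \<Rightarrow> int list pmf) \<Rightarrow> int list \<Rightarrow> real" where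
  "cost m Y \<beta> s0 P x =
     measure_pmf.expectation (P x) (\<lambda>y. dotp m y) - Min ((\<lambda>y. dotp m y) ` feasible_outputs Y \<beta> s0 x)"

definition feasible_policy :: "int \<Rightarrow> int \<Rightarrow> nat \<Rightarrow> int \<Rightarrow> int set \<Rightarrow> (int list \<Rightarrow> int list pmf) \<Rightarrow> bool" where
  "feasible_policy \<alpha> \<beta> n s0 Y P \<longleftrightarrow> (\<forall>x \<in> Xn \<alpha> n. set_pmf (P x) \<subseteq> feasible_outputs Y \<beta> s0 x)"

definition affordable :: "int \<Rightarrow> int \<Rightarrow> nat \<Rightarrow> int \<Rightarrow> real list \<Rightarrow> int set \<Rightarrow> real \<Rightarrow> (int list \<Rightarrow> int list pmf) set" where
  "affordable \<alpha> \<beta> n s0 m Y \<Delta> =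
     {P. feasible_policy \<alpha> \<beta> n s0 Y P \<and> (\<forall>x \<in> Xn \<alpha> n. cost m Y \<beta> s0 P x \<le> \<Delta>)}"

definition Yc :: "int \<Rightarrow> int \<Rightarrow> nat list \<Rightarrow> int set" where
  "Yc \<alpha> \<beta> ls = {y. \<lfloor>- real_of_int \<beta> / real (Min (set ls))\<rfloor> \<le> y \<and>
                      y \<le> \<lceil>real_of_int \<beta> / real (Min (set ls))\<rceil> + \<alpha>}"

end

theory Submission
  imports Defs
begin

fun Efun :: "(nat \<Rightarrow> int) \<Rightarrow> nat list \<Rightarrow> nat \<Rightarrow> nat \<Rightarrow> int" where
  "Efun A [] off k = A off"
| "Efun A (l#ls) off k = (if k < off + l then A off + \<lfloor>real (k - off) * real_of_int (A (off+l) - A off) / real l\<rfloor>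
     else Efun A ls (off+l) k)"

fun bnd :: "nat list \<Rightarrow> nat \<Rightarrow> nat set" where
  "bnd [] off = {off}"
| "bnd (l#ls) off = insert off (bnd ls (off+l))"

fun blocks :: "nat list \<Rightarrow> nat \<Rightarrow> (nat \<times> nat) set" where
  "blocks [] off = {}"
| "blocks (l#ls) off = insert (off,l) (blocks ls (off+l))"

lemma Efun_start: "\<forall>l\<in>set ls. l \<ge> 1 \<Longrightarrow> Efun A ls off off = A off"
  by (cases ls) auto

lemma bnd_ge: "b \<in> bnd ls off \<Longrightarrow> off \<le> b"
  by (induction ls arbitrary: off) fastforce+

lemma bnd_le: "b \<in> bnd ls off \<Longrightarrow> b \<le> off + sum_list ls"
  by (induction ls arbitrary: off) fastforce+

lemma bnd_0: "off \<in> bnd ls off"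
  by (cases ls) auto

lemma bnd_end: "off + sum_list ls \<in> bnd ls off"
proof (induction ls arbitrary: off)
  case Nil then show ?case by simp
next
  case (Cons a ls)
  have "(off+a) + sum_list ls \<in> bnd ls (off+a)" by (rule Cons.IH)
  then show ?case by (simp add: add.assoc)
qed

lemma Efun_bnd: "\<forall>l\<in>set ls. l \<ge> 1 \<Longrightarrow> b \<in> bnd ls off \<Longrightarrow> Efun A ls off b = A b"
proof (induction ls arbitrary: off)
  case Nil then show ?case by simp
next
  case (Cons l ls)
  show ?case
  proof (cases "b = off")
    case True then show ?thesis using Cons by simp
  next
    case False
    then have "b \<in> bnd ls (off+l)" using Cons by simp
    then have "b \<ge> off + l" by (rule bnd_ge)
    then show ?thesis using Cons \<open>b \<in> bnd ls (off+l)\<close> by simp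
  qed
qed

lemma blocks_props: "(o', l) \<in> blocks ls off \<Longrightarrow> l \<in> set ls \<and> off \<le> o' \<and> o' + l \<le> off + sum_list ls"
  by (induction ls arbitrary: off) fastforce+

lemma floor_incr:
  fixes T :: int and l t :: nat
  assumes "l > 0"
  shows "\<lfloor>real_of_int T / real l\<rfloor> \<le> \<lfloor>real (Suc t) * real_of_int T / real l\<rfloor> - \<lfloor>real t * real_of_int T / real l\<rfloor>"
    and "\<lfloor>real (Suc t) * real_of_int T / real l\<rfloor> - \<lfloor>real t * real_of_int T / real l\<rfloor> \<le> \<lceil>real_of_int T / real l\<rceil>"
proof -
  have e: "real (Suc t) * real_of_int T / real l = real t * real_of_int T / real l + real_of_int T / real l"
    by (simp add: algebra_simps add_divide_distrib)
  show "\<lfloor>real_of_int T / real l\<rfloor> \<le> \<lfloor>real (Suc t) * real_of_int T / real l\<rfloor> - \<lfloor>real t * real_of_int T / real l\<rfloor>"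
    unfolding e using le_floor_add[of "real t * real_of_int T / real l" "real_of_int T / real l"] by linarith
  have "real t * real_of_int T / real l + real_of_int T / real l < of_int (\<lfloor>real t * real_of_int T / real l\<rfloor> + \<lceil>real_of_int T / real l\<rceil> + 1)"
    using real_of_int_floor_add_one_gt[of "real t * real_of_int T / real l"] le_of_int_ceiling[of "real_of_int T / real l"] by linarith
  then have "\<lfloor>real t * real_of_int T / real l + real_of_int T / real l\<rfloor> \<le> \<lfloor>real t * real_of_int T / real l\<rfloor> + \<lceil>real_of_int T / real l\<rceil>"
    by linarith
  then show "\<lfloor>real (Suc t) * real_of_int T / real l\<rfloor> - \<lfloor>real t * real_of_int T / real l\<rfloor> \<le> \<lceil>real_of_int T / real l\<rceil>"
    unfolding e by linarith
qed

lemma Efun_incr: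
  assumes "\<forall>l\<in>set ls. l \<ge> 1"
    and "\<And>o' l. (o', l) \<in> blocks ls off \<Longrightarrow>
       lo \<le> \<lfloor>real_of_int (A (o'+l) - A o') / real l\<rfloor> \<and> \<lceil>real_of_int (A (o'+l) - A o') / real l\<rceil> \<le> hi"
    and "off \<le> k" "k < off + sum_list ls"
  shows "lo \<le> Efun A ls off (Suc k) - Efun A ls off k \<and> Efun A ls off (Suc k) - Efun A ls off k \<le> hi"
  using assms
proof (induction ls arbitrary: off)
  case Nil then show ?case by simp
next
  case (Cons l ls)
  define T where "T = A (off+l) - A off"
  show ?case
  proof (cases "k < off + l")
    case True
    have lpos: "l > 0" using Cons.prems by auto
    have b: "lo \<le> \<lfloor>real_of_int T / real l\<rfloor> \<and> \<lceil>real_of_int T / real l\<rceil> \<le> hi"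
      using Cons.prems(2)[of off l] unfolding T_def by simp
    have ek: "Efun A (l#ls) off k = A off + \<lfloor>real (k - off) * real_of_int T / real l\<rfloor>"
      using True by (simp add: T_def)
    have ek1: "Efun A (l#ls) off (Suc k) = A off + \<lfloor>real (Suc (k - off)) * real_of_int T / real l\<rfloor>"
    proof (cases "Suc k < off + l")
      case True then show ?thesis using Cons.prems by (simp add: T_def Suc_diff_le)
    next
      case False
      then have sk: "Suc k = off + l" using \<open>k < off + l\<close> by simp
      then have "Suc (k - off) = l" using Cons.prems by simp
      then have "\<lfloor>real (Suc (k - off)) * real_of_int T / real l\<rfloor> = T" using lpos by simp
      moreover have "Efun A (l#ls) off (Suc k) = A (off + l)"
        using sk Efun_start[of ls A "off+l"] Cons.prems(1) by simp
      ultimately show ?thesis by (simp add: T_def)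
    qed
    show ?thesis using floor_incr[OF lpos, where T=T and t="k - off"] b ek ek1 by linarith
  next
    case False
    have "Efun A (l#ls) off (Suc k) = Efun A ls (off+l) (Suc k)" "Efun A (l#ls) off k = Efun A ls (off+l) k"
      using False by auto
    moreover have "lo \<le> Efun A ls (off+l) (Suc k) - Efun A ls (off+l) k \<and> Efun A ls (off+l) (Suc k) - Efun A ls (off+l) k \<le> hi"
      apply (rule Cons.IH)
      using Cons.prems False by auto
    ultimately show ?thesis by simp
  qed
qed


lemma sum_split_add: "(\<Sum>i<l+r. f i) = (\<Sum>i<l. f i) + (\<Sum>i<r. f (l+i)) "
  for f :: "nat \<Rightarrow> 'a::comm_monoid_add"
  by (induction r) (simp_all add: add.assoc)

lemma mvec_cons: "mvec (l#ls) (p#ms) = replicate l p @ mvec ls ms"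
  by (simp add: mvec_def)

lemma length_mvec: "length ms = length ls \<Longrightarrow> length (mvec ls ms) = sum_list ls"
proof (induction ls arbitrary: ms)
  case Nil then show ?case by (simp add: mvec_def)
next
  case (Cons l ls)
  then obtain p ms' where "ms = p#ms'" by (cases ms) auto
  then show ?case using Cons by (simp add: mvec_cons)
qed

lemma block_sum:
  assumes "length ms = length ls" "\<forall>b\<in>bnd ls off. A b = B b"
  shows "(\<Sum>i<sum_list ls. mvec ls ms ! i * real_of_int (A (off+Suc i) - A (off+i))) =
         (\<Sum>i<sum_list ls. mvec ls ms ! i * real_of_int (B (off+Suc i) - B (off+i)))"
  using assms
proof (induction ls arbitrary: ms off)
  case Nil then show ?case by simp
next
  case (Cons l ls)
  then obtain p ms' where ms: "ms = p#ms'" and len: "length ms' = length ls" by (cases ms) auto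
  have tel: "(\<Sum>i<l. mvec (l#ls) ms ! i * real_of_int (C (off+Suc i) - C (off+i))) = p * real_of_int (C (off+l) - C off)"
    for C :: "nat \<Rightarrow> int"
  proof -
    have "(\<Sum>i<l. mvec (l#ls) ms ! i * real_of_int (C (off+Suc i) - C (off+i))) =
          (\<Sum>i<l. p * (real_of_int (C (off+Suc i)) - real_of_int (C (off+i))))"
      by (rule sum.cong) (auto simp: ms mvec_cons nth_append)
    also have "\<dots> = p * (\<Sum>i<l. real_of_int (C (off+Suc i)) - real_of_int (C (off+i)))"
      by (simp add: sum_distrib_left)
    also have "\<dots> = p * real_of_int (C (off+l) - C off)"
      using sum_lessThan_telescope[of "\<lambda>i. real_of_int (C (off+i))" l] by simp
    finally show ?thesis .
  qed
  have rest: "(\<Sum>i<sum_list ls. mvec (l#ls) ms ! (l+i) * real_of_int (C (off+Suc (l+i)) - C (off+(l+i)))) =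
     (\<Sum>i<sum_list ls. mvec ls ms' ! i * real_of_int (C ((off+l)+Suc i) - C ((off+l)+i)))"
    for C :: "nat \<Rightarrow> int"
    by (rule sum.cong) (auto simp: ms mvec_cons nth_append add.assoc)
  have ab: "A (off+l) = B (off+l)" "A off = B off" using Cons.prems(2) bnd_0[of "off+l" ls] by auto
  have IH: "(\<Sum>i<sum_list ls. mvec ls ms' ! i * real_of_int (A ((off+l)+Suc i) - A ((off+l)+i))) =
     (\<Sum>i<sum_list ls. mvec ls ms' ! i * real_of_int (B ((off+l)+Suc i) - B ((off+l)+i)))"
    apply (rule Cons.IH[OF len])
    using Cons.prems(2) by auto
  show ?case
    unfolding sum_list.Cons sum_split_add tel rest IH ab by simp
qed

lemma min_le_lemma:
  fixes f g :: "nat \<Rightarrow> int"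
  assumes "finite S" "S \<noteq> {}" "\<forall>j\<in>S. f j \<le> g j \<and> g j \<le> f j + c"
  shows "Min (f ` S) \<le> Min (g ` S) \<and> Min (g ` S) \<le> Min (f ` S) + c"
proof
  show "Min (f ` S) \<le> Min (g ` S)"
    using assms by (subst Min_ge_iff) (auto intro: order.trans[OF Min_le])
next
  have "Min (f ` S) \<in> f ` S" by (rule Min_in) (use assms in auto)
  then obtain j where j: "j \<in> S" "f j = Min (f ` S)" by auto
  have "Min (g ` S) \<le> g j" using assms j by auto
  moreover have "g j \<le> f j + c" using assms(3) j(1) by auto
  ultimately show "Min (g ` S) \<le> Min (f ` S) + c" using j by linarith
qed

lemma max_le_lemma:
  fixes f g :: "nat \<Rightarrow> int"
  assumes "finite S" "S \<noteq> {}" "\<forall>j\<in>S. f j \<le> g j \<and> g j \<le> f j + c"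
  shows "Max (f ` S) \<le> Max (g ` S) \<and> Max (g ` S) \<le> Max (f ` S) + c"
proof
  have "Max (f ` S) \<in> f ` S" by (rule Max_in) (use assms in auto)
  then obtain j where j: "j \<in> S" "f j = Max (f ` S)" by auto
  have "g j \<le> Max (g ` S)" using assms j by auto
  moreover have "f j \<le> g j" using assms(3) j(1) by auto
  ultimately show "Max (f ` S) \<le> Max (g ` S)" using j by linarith
next
  have "Max (g ` S) \<in> g ` S" by (rule Max_in) (use assms in auto)
  then obtain j where j: "j \<in> S" "g j = Max (g ` S)" by auto
  have "f j \<le> Max (f ` S)" using assms j by auto
  moreover have "g j \<le> f j + c" using assms(3) j(1) by auto
  ultimately show "Max (g ` S) \<le> Max (f ` S) + c" using j by linarith
qed

definition Gf :: "int \<Rightarrow> nat \<Rightarrow> (nat \<Rightarrow> int) \<Rightarrow> nat \<Rightarrow> int" where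
  "Gf a n A i = Min ((\<lambda>j. A j + a * int (i - j)) ` {..n})"

definition Hf :: "int \<Rightarrow> nat \<Rightarrow> (nat \<Rightarrow> int) \<Rightarrow> nat \<Rightarrow> int" where
  "Hf a n A i = Max ((\<lambda>j. A j - a * int (j - i)) ` {..n})"

lemma suc_diff_int: "int (Suc i - j) = int (i - j) + (if j \<le> i then 1 else 0)"
  by auto

lemma diff_suc_int: "int (j - i) = int (j - Suc i) + (if i < j then 1 else 0)"
  by auto

lemma Gf_incr: "a \<ge> 0 \<Longrightarrow> Gf a n A i \<le> Gf a n A (Suc i) \<and> Gf a n A (Suc i) \<le> Gf a n A i + a"
  unfolding Gf_def
  apply (rule min_le_lemma)
    apply simp
   apply simp
  apply (auto simp: suc_diff_int algebra_simps)
  done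

lemma Hf_incr: "a \<ge> 0 \<Longrightarrow> Hf a n A i \<le> Hf a n A (Suc i) \<and> Hf a n A (Suc i) \<le> Hf a n A i + a"
  unfolding Hf_def
  apply (rule max_le_lemma)
    apply simp
   apply simp
  apply (auto simp: diff_suc_int[of _ i] algebra_simps)
  done

lemma Gf_le: "i \<le> n \<Longrightarrow> Gf a n A i \<le> A i"
  unfolding Gf_def by (rule Min_le) (auto intro: image_eqI[of _ _ i])

lemma Hf_ge: "i \<le> n \<Longrightarrow> A i \<le> Hf a n A i"
  unfolding Hf_def by (rule Max_ge) (auto intro: image_eqI[of _ _ i])

lemma clamp_incr:
  fixes a b c a' b' c' :: int
  shows "min (a'-a) (min (b'-b) (c'-c)) \<le> max a' (min b' c') - max a (min b c)
       \<and> max a' (min b' c') - max a (min b c) \<le> max (a'-a) (max (b'-b) (c'-c))"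
  by (simp add: max_def min_def)


definition Yp :: "int list \<Rightarrow> nat \<Rightarrow> int" where
  "Yp y k = (\<Sum>i<k. y ! i)"

definition Yq :: "int \<Rightarrow> nat \<Rightarrow> nat list \<Rightarrow> int list \<Rightarrow> nat \<Rightarrow> int" where
  "Yq a n ls y i = max (Gf a n (Yp y) i) (min (Efun (Yp y) ls 0 i) (Hf a n (Yp y) i))"

definition cand :: "int \<Rightarrow> nat \<Rightarrow> nat list \<Rightarrow> int list \<Rightarrow> int list" where
  "cand a n ls y = map (\<lambda>i. Yq a n ls y (Suc i) - Yq a n ls y i) [0..<n]"

lemma Yp_Suc: "Yp y (Suc k) = Yp y k + y ! k"
  by (simp add: Yp_def)

lemma Xp_lemma:
  assumes "x \<in> Xn a n"
  shows "j + d \<le> n \<Longrightarrow> Yp x j \<le> Yp x (j+d) \<and> Yp x (j+d) \<le> Yp x j + a * int d"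
proof (induction d)
  case 0 then show ?case by simp
next
  case (Suc d)
  have "x ! (j+d) \<in> set x" using Suc.prems assms by (auto simp: Xn_def)
  then have "0 \<le> x ! (j+d) \<and> x ! (j+d) \<le> a" using assms by (auto simp: Xn_def)
  then show ?case using Suc by (simp add: Yp_Suc algebra_simps)
qed

lemma Xp_le:
  assumes "x \<in> Xn a n" "i \<le> n" "j \<le> n"
  shows "Yp x i \<le> Yp x j + a * int (i - j)"
proof (cases "i \<le> j")
  case True
  then show ?thesis using Xp_lemma[OF assms(1), of i "j - i"] assms by simp
next
  case False
  then show ?thesis using Xp_lemma[OF assms(1), of j "i - j"] assms by simp
qed

lemma key:
  fixes a b s0 :: int
  assumes a1: "a \<ge> 1" and b0: "b \<ge> 0" and lsne: "ls \<noteq> []" and ls1: "\<forall>l \<in> set ls. l \<ge> 1"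
    and sn: "sum_list ls = n"
    and xX: "x \<in> Xn a n" and ly: "length y = n"
    and st: "\<forall>i \<le> n. 0 \<le> bstate s0 x y i \<and> bstate s0 x y i \<le> b"
  shows "cand a n ls y \<in> outseqs (Yc a b ls) n"
    and "\<forall>i \<le> n. 0 \<le> bstate s0 x (cand a n ls y) i \<and> bstate s0 x (cand a n ls y) i \<le> b"
    and "\<forall>b'\<in>bnd ls 0. Yq a n ls y b' = Yp y b'"
proof -
  define L where "L = Min (set ls)"
  define lo where "lo = \<lfloor>- real_of_int b / real L\<rfloor>"
  define hi where "hi = \<lceil>real_of_int b / real L\<rceil> + a"
  have lx: "length x = n" using xX by (simp add: Xn_def)
  have stv: "bstate s0 x y i = s0 + Yp y i - Yp x i" for i
    by (simp add: bstate_def Yp_def)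
  have Lin: "L \<in> set ls" unfolding L_def using lsne by simp
  have L1: "L \<ge> 1" using Lin ls1 by auto
  have Lle: "l \<in> set ls \<Longrightarrow> L \<le> l" for l unfolding L_def by simp
  have "- real_of_int b / real L \<le> 0" using b0 L1 by (simp add: divide_nonpos_pos)
  then have lo0: "lo \<le> 0" unfolding lo_def floor_le_iff by simp
  have "0 \<le> real_of_int b / real L" using b0 L1 by simp
  then have hia: "a \<le> hi" unfolding hi_def by (simp add: ceiling_le_iff zero_le_ceiling)
  have Ycv: "Yc a b ls = {v. lo \<le> v \<and> v \<le> hi}" unfolding Yc_def lo_def hi_def L_def by simp
  have Gge: "Yp x i - s0 \<le> Gf a n (Yp y) i" if "i \<le> n" for i
    unfolding Gf_def
  proof (subst Min_ge_iff, simp, simp, clarsimp)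
    fix j assume "j \<le> n"
    have "Yp x i \<le> Yp x j + a * int (i - j)" using Xp_le[OF xX that \<open>j \<le> n\<close>] .
    moreover have "0 \<le> bstate s0 x y j" using st \<open>j \<le> n\<close> by auto
    ultimately show "Yp x i - s0 \<le> Yp y j + a * int (i - j)" unfolding stv by linarith
  qed
  have Hle: "Hf a n (Yp y) i \<le> Yp x i - s0 + b" if "i \<le> n" for i
    unfolding Hf_def
  proof (subst Max_le_iff, simp, simp, clarsimp)
    fix j assume "j \<le> n"
    have "Yp x j \<le> Yp x i + a * int (j - i)" using Xp_le[OF xX \<open>j \<le> n\<close> that] .
    moreover have "bstate s0 x y j \<le> b" using st \<open>j \<le> n\<close> by auto
    ultimately show "Yp y j - a * int (j - i) \<le> Yp x i - s0 + b" unfolding stv by linarith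
  qed
  have GYq: "Gf a n (Yp y) i \<le> Yq a n ls y i" for i unfolding Yq_def by simp
  have YqH: "Yq a n ls y i \<le> Hf a n (Yp y) i" if "i \<le> n" for i
    using Gf_le[OF that, of a "Yp y"] Hf_ge[OF that, of "Yp y" a] unfolding Yq_def by simp
  show bq: "\<forall>b'\<in>bnd ls 0. Yq a n ls y b' = Yp y b'"
  proof
    fix b' assume bb: "b' \<in> bnd ls 0"
    then have "b' \<le> n" using bnd_le[OF bb] sn by simp
    then show "Yq a n ls y b' = Yp y b'"
      using Efun_bnd[OF ls1 bb, of "Yp y"] Gf_le[of b' n a "Yp y"] Hf_ge[of b' n "Yp y" a]
      unfolding Yq_def by simp
  qed
  have Yq0: "Yq a n ls y 0 = 0" using bq bnd_0[of 0 ls] by (simp add: Yp_def)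
  have csum: "(\<Sum>k<i. cand a n ls y ! k) = Yq a n ls y i" if "i \<le> n" for i
  proof -
    have "(\<Sum>k<i. cand a n ls y ! k) = (\<Sum>k<i. Yq a n ls y (Suc k) - Yq a n ls y k)"
      by (rule sum.cong) (use that in \<open>auto simp: cand_def\<close>)
    then show ?thesis using sum_lessThan_telescope[of "Yq a n ls y" i] Yq0 by simp
  qed
  have cst: "bstate s0 x (cand a n ls y) i = s0 + Yq a n ls y i - Yp x i" if "i \<le> n" for i
    using csum[OF that] by (simp add: bstate_def Yp_def)
  show "\<forall>i \<le> n. 0 \<le> bstate s0 x (cand a n ls y) i \<and> bstate s0 x (cand a n ls y) i \<le> b"
  proof (intro allI impI)
    fix i assume "i \<le> n"
    show "0 \<le> bstate s0 x (cand a n ls y) i \<and> bstate s0 x (cand a n ls y) i \<le> b"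
      unfolding cst[OF \<open>i \<le> n\<close>] using Gge[OF \<open>i \<le> n\<close>] Hle[OF \<open>i \<le> n\<close>] GYq[of i] YqH[OF \<open>i \<le> n\<close>]
      by linarith
  qed
  have blk: "lo \<le> \<lfloor>real_of_int (Yp y (o'+l) - Yp y o') / real l\<rfloor> \<and> \<lceil>real_of_int (Yp y (o'+l) - Yp y o') / real l\<rceil> \<le> hi"
    if ob: "(o', l) \<in> blocks ls 0" for o' l
  proof -
    have p: "l \<in> set ls" "o' + l \<le> n" using blocks_props[OF ob] sn by auto
    have Ll: "L \<le> l" using Lle[OF p(1)] .
    have lpos: "real l > 0" using L1 Ll by simp
    define T where "T = Yp y (o'+l) - Yp y o'"
    have x1: "Yp x o' \<le> Yp x (o'+l)" "Yp x (o'+l) \<le> Yp x o' + a * int l"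
      using Xp_lemma[OF xX, of o' l] p by auto
    have s1: "0 \<le> bstate s0 x y o'" "bstate s0 x y o' \<le> b" "0 \<le> bstate s0 x y (o'+l)" "bstate s0 x y (o'+l) \<le> b"
      using st p by auto
    have Tlo: "- b \<le> T" and Thi: "T \<le> b + a * int l" using x1 s1 unfolding stv T_def by linarith+
    have "- real_of_int b / real L \<le> - real_of_int b / real l"
      using b0 L1 Ll by (simp add: frac_le)
    also have "\<dots> \<le> real_of_int T / real l"
      using divide_right_mono[of "real_of_int (- b)" "real_of_int T" "real l"] Tlo lpos by simp
    finally have f1: "lo \<le> \<lfloor>real_of_int T / real l\<rfloor>" unfolding lo_def by (rule floor_mono)
    have "real_of_int T / real l \<le> real_of_int (b + a * int l) / real l"
    proof -
      have "real_of_int T \<le> real_of_int (b + a * int l)" using Thi by linarith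
      then show ?thesis using divide_right_mono[of "real_of_int T" "real_of_int (b + a * int l)" "real l"] lpos by simp
    qed
    also have "\<dots> = real_of_int b / real l + real_of_int a"
      using lpos by (simp add: field_simps)
    also have "\<dots> \<le> real_of_int b / real L + real_of_int a"
      using b0 L1 Ll by (simp add: frac_le)
    finally have "\<lceil>real_of_int T / real l\<rceil> \<le> \<lceil>real_of_int b / real L + real_of_int a\<rceil>" by (rule ceiling_mono)
    then have f2: "\<lceil>real_of_int T / real l\<rceil> \<le> hi" unfolding hi_def by simp
    show ?thesis using f1 f2 unfolding T_def by simp
  qed
  have inc: "lo \<le> Yq a n ls y (Suc k) - Yq a n ls y k \<and> Yq a n ls y (Suc k) - Yq a n ls y k \<le> hi"
    if "k < n" for k
  proof -
    have e: "lo \<le> Efun (Yp y) ls 0 (Suc k) - Efun (Yp y) ls 0 k \<and> Efun (Yp y) ls 0 (Suc k) - Efun (Yp y) ls 0 k \<le> hi"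
      by (rule Efun_incr[OF ls1 blk]) (use that sn in auto)
    have g: "Gf a n (Yp y) k \<le> Gf a n (Yp y) (Suc k) \<and> Gf a n (Yp y) (Suc k) \<le> Gf a n (Yp y) k + a"
      using Gf_incr a1 by simp
    have h: "Hf a n (Yp y) k \<le> Hf a n (Yp y) (Suc k) \<and> Hf a n (Yp y) (Suc k) \<le> Hf a n (Yp y) k + a"
      using Hf_incr a1 by simp
    note c = clamp_incr[of "Gf a n (Yp y) (Suc k)" "Gf a n (Yp y) k" "Efun (Yp y) ls 0 (Suc k)" "Efun (Yp y) ls 0 k"
        "Hf a n (Yp y) (Suc k)" "Hf a n (Yp y) k"]
    show ?thesis using e g h c lo0 hia unfolding Yq_def
      by (simp only: min_def max_def) (auto split: if_splits)
  qed
  show "cand a n ls y \<in> outseqs (Yc a b ls) n"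
    unfolding outseqs_def Ycv using inc by (auto simp: cand_def)
qed


lemma dotp_cand:
  assumes "length ms = length ls" "sum_list ls = n" "length y = n"
    and "\<forall>b'\<in>bnd ls 0. Yq a n ls y b' = Yp y b'"
  shows "dotp (mvec ls ms) (cand a n ls y) = dotp (mvec ls ms) y"
proof -
  have "dotp (mvec ls ms) (cand a n ls y) =
     (\<Sum>i<sum_list ls. mvec ls ms ! i * real_of_int (Yq a n ls y (0+Suc i) - Yq a n ls y (0+i)))"
    unfolding dotp_def using assms by (auto simp: cand_def intro!: sum.cong)
  also have "\<dots> = (\<Sum>i<sum_list ls. mvec ls ms ! i * real_of_int (Yp y (0+Suc i) - Yp y (0+i)))"
    by (rule block_sum) (use assms in auto)
  also have "\<dots> = dotp (mvec ls ms) y"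
    unfolding dotp_def using assms by (auto simp: Yp_Suc intro!: sum.cong)
  finally show ?thesis .
qed

lemma feas_finite:
  assumes "x \<in> Xn a n"
  shows "finite (feasible_outputs Y b s0 x)"
proof -
  have lx: "length x = n" using assms by (simp add: Xn_def)
  have "feasible_outputs Y b s0 x \<subseteq> {ys. set ys \<subseteq> {-b..b+a} \<and> length ys = n}"
  proof clarify
    fix ys assume yf: "ys \<in> feasible_outputs Y b s0 x"
    then have ly: "length ys = n" and st: "\<forall>i \<le> n. 0 \<le> bstate s0 x ys i \<and> bstate s0 x ys i \<le> b"
      using lx by (auto simp: feasible_outputs_def outseqs_def)
    have "ys ! k \<in> {-b..b+a}" if "k < n" for k
    proof -
      have "x ! k \<in> set x" using that lx by simp
      then have xk: "0 \<le> x ! k \<and> x ! k \<le> a" using assms by (auto simp: Xn_def)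
      have "bstate s0 x ys (Suc k) = bstate s0 x ys k + ys ! k - x ! k"
        by (simp add: bstate_def)
      moreover have "0 \<le> bstate s0 x ys k \<and> bstate s0 x ys k \<le> b" "0 \<le> bstate s0 x ys (Suc k) \<and> bstate s0 x ys (Suc k) \<le> b"
        using st that by auto
      ultimately show ?thesis using xk by auto
    qed
    then show "set ys \<subseteq> {-b..b+a} \<and> length ys = n" using ly by (auto simp: in_set_conv_nth)
  qed
  moreover have "finite {ys. set ys \<subseteq> {-b..b+a} \<and> length ys = n}"
    by (rule finite_lists_length_eq) simp
  ultimately show ?thesis by (rule finite_subset)
qed

theorem lemma4:
  fixes \<alpha> \<beta> s0 :: int and n :: nat and ls :: "nat list" and ms :: "real list"
    and Y :: "int set" and \<Delta> :: real and P :: "int list \<Rightarrow> int list pmf"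
  assumes "\<alpha> \<ge> 1" and "\<beta> \<ge> 0" and "n \<ge> 1" and "0 \<le> s0" and "s0 \<le> \<beta>"
    and "ls \<noteq> []" and "length ms = length ls" and "\<forall>l \<in> set ls. l \<ge> 1"
    and "sum_list ls = n"
    and "Yc \<alpha> \<beta> ls \<subseteq> Y"
    and "\<Delta> \<ge> 0"
    and "P \<in> affordable \<alpha> \<beta> n s0 (mvec ls ms) Y \<Delta>"
  shows "\<exists>F :: int list \<Rightarrow> int list.
           (\<forall>y \<in> outseqs Y n. F y \<in> outseqs (Yc \<alpha> \<beta> ls) n) \<and>
           (\<lambda>x. map_pmf F (P x)) \<in> affordable \<alpha> \<beta> n s0 (mvec ls ms) (Yc \<alpha> \<beta> ls) \<Delta>"
proof -
  note a = assms
  define m where "m = mvec ls ms"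
  define F where "F y = (if cand \<alpha> n ls y \<in> outseqs (Yc \<alpha> \<beta> ls) n then cand \<alpha> n ls y else replicate n 0)" for y
  define L where "L = Min (set ls)"
  have L1: "L \<ge> 1" unfolding L_def using a(6,8) by simp
  have z1: "\<lfloor>- real_of_int \<beta> / real L\<rfloor> \<le> 0"
  proof -
    have "- real_of_int \<beta> / real L \<le> 0" using a(2) L1 by (simp add: divide_nonpos_pos)
    then show ?thesis unfolding floor_le_iff by simp
  qed
  have z2: "0 \<le> \<lceil>real_of_int \<beta> / real L\<rceil> + \<alpha>"
  proof -
    have "0 \<le> real_of_int \<beta> / real L" using a(2) L1 by simp
    then show ?thesis using a(1) by (simp add: zero_le_ceiling) 
  qed
  have zY: "0 \<in> Yc \<alpha> \<beta> ls" unfolding Yc_def using z1 z2 L_def by simp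
  have Fout: "F y \<in> outseqs (Yc \<alpha> \<beta> ls) n" for y
    unfolding F_def using zY by (auto simp: outseqs_def)
  have good: "F y = cand \<alpha> n ls y \<and> F y \<in> feasible_outputs (Yc \<alpha> \<beta> ls) \<beta> s0 x \<and> dotp m (F y) = dotp m y"
    if xX: "x \<in> Xn \<alpha> n" and yf: "y \<in> feasible_outputs Y \<beta> s0 x" for x y
  proof -
    have lx: "length x = n" using xX by (simp add: Xn_def)
    have ly: "length y = n" and st: "\<forall>i \<le> n. 0 \<le> bstate s0 x y i \<and> bstate s0 x y i \<le> \<beta>"
      using yf lx by (auto simp: feasible_outputs_def outseqs_def)
    note k = key[OF a(1,2,6,8,9) xX ly st]
    have Fc: "F y = cand \<alpha> n ls y" using k(1) by (simp add: F_def)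
    show ?thesis
      using k Fc dotp_cand[OF a(7,9) ly k(3)] lx
      by (auto simp: feasible_outputs_def m_def)
  qed
  show ?thesis
  proof (intro exI[of _ F] conjI ballI)
    fix y show "F y \<in> outseqs (Yc \<alpha> \<beta> ls) n" by (rule Fout)
  next
    have Pf: "feasible_policy \<alpha> \<beta> n s0 Y P" and Pc: "\<forall>x \<in> Xn \<alpha> n. cost m Y \<beta> s0 P x \<le> \<Delta>"
      using a(12) by (auto simp: affordable_def m_def)
    have feas: "feasible_policy \<alpha> \<beta> n s0 (Yc \<alpha> \<beta> ls) (\<lambda>x. map_pmf F (P x))"
      unfolding feasible_policy_def
    proof (intro ballI subsetI)
      fix x z assume xX: "x \<in> Xn \<alpha> n" and "z \<in> set_pmf (map_pmf F (P x))"
      then obtain y where "y \<in> set_pmf (P x)" "z = F y" by auto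
      moreover have "y \<in> feasible_outputs Y \<beta> s0 x" using Pf xX \<open>y \<in> set_pmf (P x)\<close>
        by (auto simp: feasible_policy_def)
      ultimately show "z \<in> feasible_outputs (Yc \<alpha> \<beta> ls) \<beta> s0 x" using good xX by blast
    qed
    have cst: "cost m (Yc \<alpha> \<beta> ls) \<beta> s0 (\<lambda>x. map_pmf F (P x)) x \<le> \<Delta>" if xX: "x \<in> Xn \<alpha> n" for x
    proof -
      have lx: "length x = n" using xX by (simp add: Xn_def)
      have e: "measure_pmf.expectation (map_pmf F (P x)) (dotp m) = measure_pmf.expectation (P x) (dotp m)"
      proof -
        have "measure_pmf.expectation (map_pmf F (P x)) (dotp m) = measure_pmf.expectation (P x) (\<lambda>y. dotp m (F y))"
          by simp
        also have "\<dots> = measure_pmf.expectation (P x) (dotp m)"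
        proof (intro integral_cong_AE)
          show "AE y in measure_pmf (P x). dotp m (F y) = dotp m y"
          proof (rule AE_pmfI)
            fix y assume "y \<in> set_pmf (P x)"
            then have "y \<in> feasible_outputs Y \<beta> s0 x" using Pf xX by (auto simp: feasible_policy_def)
            then show "dotp m (F y) = dotp m y" using good xX by blast
          qed
        qed auto
        finally show ?thesis .
      qed
      have sub: "feasible_outputs (Yc \<alpha> \<beta> ls) \<beta> s0 x \<subseteq> feasible_outputs Y \<beta> s0 x"
        using a(10) by (auto simp: feasible_outputs_def outseqs_def)
      have ne: "x \<in> feasible_outputs (Yc \<alpha> \<beta> ls) \<beta> s0 x"
      proof -
        have "set x \<subseteq> Yc \<alpha> \<beta> ls"
        proof
          fix v assume "v \<in> set x"
          then have "0 \<le> v \<and> v \<le> \<alpha>" using xX by (auto simp: Xn_def)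
          moreover have "0 \<le> \<lceil>real_of_int \<beta> / real L\<rceil>"
          proof -
            have "0 \<le> real_of_int \<beta> / real L" using a(2) L1 by simp
            then show ?thesis by (simp add: zero_le_ceiling)
          qed
          ultimately show "v \<in> Yc \<alpha> \<beta> ls" unfolding Yc_def L_def[symmetric] mem_Collect_eq using z1 by linarith
        qed
        then show ?thesis using a(4,5) by (auto simp: feasible_outputs_def outseqs_def bstate_def)
      qed
      have mm: "Min ((\<lambda>y. dotp m y) ` feasible_outputs Y \<beta> s0 x) \<le> Min ((\<lambda>y. dotp m y) ` feasible_outputs (Yc \<alpha> \<beta> ls) \<beta> s0 x)"
        by (rule Min_antimono) (use sub ne feas_finite[OF xX] in auto)
      have "cost m Y \<beta> s0 P x \<le> \<Delta>" using Pc xX by auto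
      then show ?thesis using e mm unfolding cost_def by simp
    qed
    show "(\<lambda>x. map_pmf F (P x)) \<in> affordable \<alpha> \<beta> n s0 (mvec ls ms) (Yc \<alpha> \<beta> ls) \<Delta>"
      unfolding affordable_def using feas cst by (simp add: m_def)
  qed
qed

end
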